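(* Assume $x(0)=x'(0)=0$ and $y_1(t)\to0$ as $t\to\infty$. Let $L_1(t,s)=\omega\sin(\omega(t-s))+\cos(\omega(t-s))$. Then $x(t)\to0$ as $t\to\infty$ if and only if \[ \lim_{t\to\infty}\int_0^tE(t,s)L_1(t,s)y_1(s)\,ds=0. \]
   Context: Standing assumptions: $\omega>0$ is a constant; $p\in C^1([0,\infty))$ with $p(t)>0$ and $p'(t)<0$ for all $t\ge0$, $\int_0^\infty p(t)\,dt=\infty$ and $\int_0^\infty p(t)^2\,dt<\infty$; $f\in L^1_{\mathrm{loc}}([0,\infty))$. $x$ denotes the solution of $x''(t)+p(t)x'(t)+\omega^2x(t)=f(t)$, $t\ge0$. Notation: $E(t,s)=\exp(-\frac12\int_s^tp(\tau)\,d\tau)$ for $0\le s\le t$; $y_1(t)=\int_0^te^{-\omega^2(t-s)}f(s)\,ds$. *)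

theory Defs
  imports "HOL-Analysis.Analysis"
begin

definition Efun :: "(real \<Rightarrow> real) \<Rightarrow> real \<Rightarrow> real \<Rightarrow> real" where
  "Efun p t s = exp (- (1/2) * (LINT \<tau>:{s..t}|lborel. p \<tau>))"

definition y1fun :: "real \<Rightarrow> (real \<Rightarrow> real) \<Rightarrow> real \<Rightarrow> real" where
  "y1fun \<omega> f t = (LINT s:{0..t}|lborel. exp (- (\<omega>^2) * (t - s)) * f s)"

definition L1fun :: "real \<Rightarrow> real \<Rightarrow> real \<Rightarrow> real" where
  "L1fun \<omega> t s = \<omega> * sin (\<omega> * (t - s)) + cos (\<omega> * (t - s))"

end

theory Submission
  imports Defs
begin

lemma at_within_Ici_eq:
  fixes t b :: real
  assumes "t \<ge> 0" "b > t"
  shows "at t within {0..} = at t within {0..b}"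
  by (rule at_within_nhd[where S="{t-1<..<b}"]) (use assms in auto)

lemma cont_Ici:
  fixes f :: "real \<Rightarrow> real"
  assumes "\<And>b. continuous_on {0..b} f"
  shows "continuous_on {0..} f"
  unfolding continuous_on_eq_continuous_within
proof
  fix t :: real assume "t \<in> {0..}"
  then have "at t within {0..} = at t within {0..t+1}" by (intro at_within_Ici_eq) auto
  moreover have "continuous (at t within {0..t+1}) f"
    using assms[of "t+1"] \<open>t \<in> {0..}\<close> by (simp add: continuous_on_eq_continuous_within)
  ultimately show "continuous (at t within {0..}) f" by (simp add: continuous_within)
qed

lemma deriv_imp_cont:
  fixes f f' :: "real \<Rightarrow> real"
  assumes "\<And>t. t \<in> S \<Longrightarrow> (f has_real_derivative f' t) (at t within S)"
  shows "continuous_on S f"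
  unfolding continuous_on_eq_continuous_within using assms DERIV_continuous by blast

lemma integral_deriv_Ici:
  fixes h :: "real \<Rightarrow> real"
  assumes "continuous_on {0..} h" "t \<ge> 0"
  shows "((\<lambda>u. integral {0..u} h) has_real_derivative h t) (at t within {0..})"
proof -
  have "at t within {0..} = at t within {0..t+1}" using assms by (intro at_within_Ici_eq) auto
  moreover have "((\<lambda>u. integral {0..u} h) has_real_derivative h t) (at t within {0..t+1})"
    using assms by (intro integral_has_real_derivative) (auto intro: continuous_on_subset)
  ultimately show ?thesis by simp
qed

lemma deriv_unique0:
  fixes F G :: "real \<Rightarrow> real"
  assumes "\<And>t. t \<ge> 0 \<Longrightarrow> (F has_real_derivative D t) (at t within {0..})"
    and "\<And>t. t \<ge> 0 \<Longrightarrow> (G has_real_derivative D t) (at t within {0..})"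
    and "F 0 = G 0" and "t \<ge> 0"
  shows "F t = G t"
proof -
  have "\<exists>c. \<forall>x\<in>{0::real..}. (\<lambda>u. F u - G u) x = c"
    by (rule has_field_derivative_zero_constant)
       (use assms in \<open>auto intro!: derivative_eq_intros\<close>)
  then obtain c where "\<forall>x\<in>{0::real..}. F x - G x = c" by auto
  then have "F t - G t = F 0 - G 0" using assms(4) by auto
  then show ?thesis using assms(3) by simp
qed

lemma exp_seg_integral:
  fixes \<omega> s t c :: real
  assumes "\<omega> \<noteq> 0"
  shows "(LINT r|lborel. (if s \<le> r \<and> r \<le> t then exp (- (\<omega>^2) * (r - s)) * c else 0))
       = (if s \<le> t then c * (1 - exp (- (\<omega>^2) * (t - s))) / \<omega>^2 else 0)"
proof (cases "s \<le> t")
  case True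
  have "(LINT r|lborel. (if s \<le> r \<and> r \<le> t then exp (- (\<omega>^2) * (r - s)) * c else 0))
      = integral\<^sup>L lborel (\<lambda>r. indicator {s..t} r *\<^sub>R (exp (- (\<omega>^2) * (r - s)) * c))"
    by (intro Bochner_Integration.integral_cong) (auto simp: indicator_def)
  also have "\<dots> = (- exp (- (\<omega>^2) * (t - s)) * c / \<omega>^2) - (- exp (- (\<omega>^2) * (s - s)) * c / \<omega>^2)"
  proof (rule integral_FTC_atLeastAtMost[OF True])
    fix x assume "s \<le> x" "x \<le> t"
    show "((\<lambda>r. - exp (- (\<omega>^2) * (r - s)) * c / \<omega>^2) has_vector_derivative exp (- (\<omega>^2) * (x - s)) * c) (at x within {s..t})"
      unfolding has_real_derivative_iff_has_vector_derivative[symmetric]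
      using assms by (auto intro!: derivative_eq_intros simp: field_simps)
  qed (auto intro!: continuous_intros)
  also have "\<dots> = c * (1 - exp (- (\<omega>^2) * (t - s))) / \<omega>^2"
    using assms by (simp add: field_simps)
  finally show ?thesis using True by simp
next
  case False
  then have "(\<lambda>r. if s \<le> r \<and> r \<le> t then exp (- (\<omega>^2) * (r - s)) * c else 0) = (\<lambda>r. 0::real)"
    by auto
  then show ?thesis using False by simp
qed

lemma y1_identity:
  fixes \<omega> t :: real and f :: "real \<Rightarrow> real"
  assumes t: "t \<ge> 0" and w: "\<omega> \<noteq> 0" and fint: "set_integrable lborel {0..t} f"
  shows "\<omega>^2 * (LINT r:{0..t}|lborel. y1fun \<omega> f r) = (LINT s:{0..t}|lborel. f s) - y1fun \<omega> f t"
proof -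
  define fi where "fi s = indicator {0..t} s * f s" for s
  have fi_int: "integrable lborel fi"
    using fint unfolding set_integrable_def fi_def by simp
  have fim[measurable]: "fi \<in> borel_measurable lborel"
    using fi_int by (rule borel_measurable_integrable)
  define H where "H s r = (if s \<le> r \<and> r \<le> t then exp (- (\<omega>^2) * (r - s)) * fi s else 0)" for s r
  have Hm: "case_prod H \<in> borel_measurable (lborel \<Otimes>\<^sub>M lborel)"
    unfolding H_def by measurable
  have Hr: "(LINT r|lborel. H s r) = (if s \<le> t then fi s * (1 - exp (- (\<omega>^2) * (t - s))) / \<omega>^2 else 0)" for s
    unfolding H_def by (rule exp_seg_integral[OF w])
  have fi0: "fi s = 0" if "\<not> s \<le> t" for s using that unfolding fi_def by auto
  have Hr': "(LINT r|lborel. H s r) = fi s * ((1 - exp (- (\<omega>^2) * (t - s))) / \<omega>^2)" for s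
    using fi0[of s] by (simp add: Hr)
  have Hn: "(LINT r|lborel. norm (H s r)) = \<bar>fi s\<bar> * ((1 - exp (- (\<omega>^2) * (t - s))) / \<omega>^2)" for s
  proof -
    have "(LINT r|lborel. norm (H s r)) = (LINT r|lborel. (if s \<le> r \<and> r \<le> t then exp (- (\<omega>^2) * (r - s)) * \<bar>fi s\<bar> else 0))"
      by (intro Bochner_Integration.integral_cong) (auto simp: H_def abs_mult)
    also have "\<dots> = \<bar>fi s\<bar> * ((1 - exp (- (\<omega>^2) * (t - s))) / \<omega>^2)"
      using fi0[of s] by (simp add: exp_seg_integral[OF w])
    finally show ?thesis .
  qed
  have bnd: "norm (g s * ((1 - exp (- (\<omega>^2) * (t - s))) / \<omega>^2)) \<le> norm (g s / \<omega>^2)" if "g s = 0 \<or> s \<le> t" for g :: "real \<Rightarrow> real" and s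
  proof (cases "g s = 0")
    case False
    then have st: "s \<le> t" using that by auto
    have "exp (- (\<omega>^2) * (t - s)) \<le> 1" using st by (simp add: mult_nonneg_nonneg)
    moreover have "exp (- (\<omega>^2) * (t - s)) > 0" by simp
    ultimately have "\<bar>1 - exp (- (\<omega>^2) * (t - s))\<bar> \<le> 1" by linarith
    then have "\<bar>g s\<bar> * \<bar>1 - exp (- (\<omega>^2) * (t - s))\<bar> \<le> \<bar>g s\<bar>"
      by (simp add: mult_left_le)
    then show ?thesis using w by (simp add: abs_mult divide_right_mono)
  qed simp
  have int1: "integrable lborel (\<lambda>s. g s * ((1 - exp (- (\<omega>^2) * (t - s))) / \<omega>^2))"
    if gi: "integrable lborel g" and g0: "\<And>s. \<not> s \<le> t \<Longrightarrow> g s = 0" for g :: "real \<Rightarrow> real"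
  proof (rule Bochner_Integration.integrable_bound[where f="\<lambda>s. g s / \<omega>^2"])
    show "integrable lborel (\<lambda>s. g s / \<omega>^2)" using gi by simp
    have [measurable]: "g \<in> borel_measurable lborel" using gi by (rule borel_measurable_integrable)
    show "(\<lambda>s. g s * ((1 - exp (- (\<omega>^2) * (t - s))) / \<omega>^2)) \<in> borel_measurable lborel" by measurable
    show "AE s in lborel. norm (g s * ((1 - exp (- (\<omega>^2) * (t - s))) / \<omega>^2)) \<le> norm (g s / \<omega>^2)"
      using g0 by (intro AE_I2 bnd) blast
  qed
  have Hint: "integrable (lborel \<Otimes>\<^sub>M lborel) (case_prod H)"
  proof (rule lborel_pair.Fubini_integrable)
    show "case_prod H \<in> borel_measurable (lborel \<Otimes>\<^sub>M lborel)" by (rule Hm)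
    show "integrable lborel (\<lambda>x. LINT y|lborel. norm (case_prod H (x, y)))"
      unfolding case_prod_conv Hn
      using int1[of "\<lambda>s. \<bar>fi s\<bar>"] fi_int fi0 by simp
    have "integrable lborel (H s)" for s
    proof -
      have "H s = (\<lambda>r. indicator {s..t} r *\<^sub>R (exp (- (\<omega>^2) * (r - s)) * fi s))"
        by (auto simp: H_def indicator_def)
      moreover have "integrable lborel (\<lambda>r. indicator {s..t} r *\<^sub>R (exp (- (\<omega>^2) * (r - s)) * fi s))"
        by (intro borel_integrable_compact) (auto intro!: continuous_intros)
      ultimately show ?thesis by simp
    qed
    then show "AE x in lborel. integrable lborel (\<lambda>y. case_prod H (x, y))" by simp
  qed
  have inner_s: "indicator {0..t} r * y1fun \<omega> f r = (LINT s|lborel. H s r)" for r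
  proof (cases "0 \<le> r \<and> r \<le> t")
    case True
    have "y1fun \<omega> f r = (LINT s|lborel. indicator {0..r} s *\<^sub>R (exp (- (\<omega>^2) * (r - s)) * f s))"
      unfolding y1fun_def set_lebesgue_integral_def ..
    also have "\<dots> = (LINT s|lborel. H s r)"
      using True by (intro Bochner_Integration.integral_cong) (auto simp: H_def fi_def indicator_def)
    finally show ?thesis using True by simp
  next
    case False
    have "(\<lambda>s. H s r) = (\<lambda>s. 0)"
      using False by (auto simp: H_def fi_def indicator_def)
    then show ?thesis using False by simp
  qed
  have "(LINT r:{0..t}|lborel. y1fun \<omega> f r) = (LINT r|lborel. (LINT s|lborel. H s r))"
    unfolding set_lebesgue_integral_def using inner_s by simp
  also have "\<dots> = (LINT s|lborel. (LINT r|lborel. H s r))"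
    by (rule lborel_pair.Fubini_integral[OF Hint])
  also have "\<dots> = (LINT s|lborel. fi s * ((1 - exp (- (\<omega>^2) * (t - s))) / \<omega>^2))"
    unfolding Hr' ..
  also have "\<dots> = (LINT s|lborel. fi s / \<omega>^2 - (fi s * exp (- (\<omega>^2) * (t - s))) / \<omega>^2)"
    by (intro Bochner_Integration.integral_cong) (auto simp: right_diff_distrib diff_divide_distrib)
  also have "\<dots> = (LINT s|lborel. fi s) / \<omega>^2 - (LINT s|lborel. fi s * exp (- (\<omega>^2) * (t - s))) / \<omega>^2"
  proof -
    have i2: "integrable lborel (\<lambda>s. fi s * exp (- (\<omega>^2) * (t - s)))"
    proof (rule Bochner_Integration.integrable_bound[where f="\<lambda>s. fi s"])
      show "integrable lborel fi" by (rule fi_int)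
      show "(\<lambda>s. fi s * exp (- (\<omega>^2) * (t - s))) \<in> borel_measurable lborel" by measurable
      show "AE s in lborel. norm (fi s * exp (- (\<omega>^2) * (t - s))) \<le> norm (fi s)"
      proof (rule AE_I2)
        fix s
        show "norm (fi s * exp (- (\<omega>^2) * (t - s))) \<le> norm (fi s)"
        proof (cases "s \<le> t")
          case True
          then have "exp (- (\<omega>^2) * (t - s)) \<le> 1" by (simp add: mult_nonneg_nonneg)
          then show ?thesis by (simp add: abs_mult mult_left_le)
        qed (simp add: fi0)
      qed
    qed
    show ?thesis using fi_int i2 by simp
  qed
  also have "(LINT s|lborel. fi s) = (LINT s:{0..t}|lborel. f s)"
    unfolding set_lebesgue_integral_def fi_def by simp
  also have "(LINT s|lborel. fi s * exp (- (\<omega>^2) * (t - s))) = y1fun \<omega> f t"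
    unfolding y1fun_def set_lebesgue_integral_def fi_def
    by (intro Bochner_Integration.integral_cong) auto
  finally show ?thesis using w by (simp add: field_simps)
qed

lemma alg1:
  fixes w ss cc C S E y p :: real
  assumes "E \<noteq> 0" "ss^2 + cc^2 = 1"
  shows "((-w * ss * C + cc * (E * cc * y) + w * cc * S + ss * (E * ss * y)) * E - (cc * C + ss * S) * (E * (p / 2))) / (E * E)
    = - (p / 2) * ((cc * C + ss * S) / E) - w * ((ss * C - cc * S) / E) + y"
proof -
  have "cc * (E * cc * y) + ss * (E * ss * y) = E * y * (ss^2 + cc^2)"
    by (simp add: power2_eq_square algebra_simps)
  also have "\<dots> = E * y" using assms(2) by simp
  finally have h: "cc * (E * cc * y) + ss * (E * ss * y) = E * y" .
  have "((-w * ss * C + cc * (E * cc * y) + w * cc * S + ss * (E * ss * y)) * E - (cc * C + ss * S) * (E * (p / 2)))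
      = ((-w * ss * C + w * cc * S + (cc * (E * cc * y) + ss * (E * ss * y))) * E - (cc * C + ss * S) * (E * (p / 2)))"
    by (simp add: algebra_simps)
  also have "\<dots> = ((-w * ss * C + w * cc * S + E * y) * E - (cc * C + ss * S) * (E * (p / 2)))"
    unfolding h ..
  finally show ?thesis using assms(1) by (simp add: field_simps)
qed

lemma alg2:
  fixes w ss cc C S E y p :: real
  assumes "E \<noteq> 0"
  shows "((w * cc * C + ss * (E * cc * y) + w * ss * S - cc * (E * ss * y)) * E - (ss * C - cc * S) * (E * (p / 2))) / (E * E)
    = - (p / 2) * ((ss * C - cc * S) / E) + w * ((cc * C + ss * S) / E)"
  using assms by (simp add: field_simps)

lemma alg3:
  fixes E ss cc a b :: real
  assumes "ss^2 + cc^2 = 1" "E \<noteq> 0"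
  shows "b = (E * (a * cc + b * ss) * ss + E * (- a * ss + b * cc) * cc) / E"
proof -
  have "E * (a * cc + b * ss) * ss + E * (- a * ss + b * cc) * cc = E * b * (ss^2 + cc^2)"
    by (simp add: power2_eq_square algebra_simps)
  then show ?thesis using assms by simp
qed

lemma repr:
  fixes \<omega> t :: real and p p' x x' y1 Ep C S g Cg Sg :: "real \<Rightarrow> real"
  assumes w: "\<omega> \<noteq> 0"
    and pd: "\<And>t. t \<ge> 0 \<Longrightarrow> (p has_real_derivative p' t) (at t within {0..})"
    and p'c: "continuous_on {0..} p'"
    and xd: "\<And>t. t \<ge> 0 \<Longrightarrow> (x has_real_derivative x' t) (at t within {0..})"
    and x'c: "continuous_on {0..} x'"
    and y1c: "continuous_on {0..} y1"
    and wd: "\<And>t. t \<ge> 0 \<Longrightarrow> ((\<lambda>t. x' t - y1 t) has_real_derivative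
                 (\<omega>^2 * y1 t - p t * x' t - \<omega>^2 * x t)) (at t within {0..})"
    and x0: "x 0 = 0" and x'0: "x' 0 = 0" and y10: "y1 0 = 0"
    and t: "t \<ge> 0"
    and Ep_def: "Ep = (\<lambda>t. exp (integral {0..t} p / 2))"
    and C_def: "C = (\<lambda>t. integral {0..t} (\<lambda>s. Ep s * cos (\<omega> * s) * y1 s))"
    and S_def: "S = (\<lambda>t. integral {0..t} (\<lambda>s. Ep s * sin (\<omega> * s) * y1 s))"
    and g_def: "g = (\<lambda>s. (p s ^ 2 / 4 + p' s / 2) * x s - p s / 2 * y1 s)"
    and Cg_def: "Cg = (\<lambda>t. integral {0..t} (\<lambda>s. Ep s * cos (\<omega> * s) * g s))"
    and Sg_def: "Sg = (\<lambda>t. integral {0..t} (\<lambda>s. Ep s * sin (\<omega> * s) * g s))"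
  shows "\<omega> * (x t - ((\<omega> * sin (\<omega> * t) + cos (\<omega> * t)) * C t + (sin (\<omega> * t) - \<omega> * cos (\<omega> * t)) * S t) / Ep t)
         = (sin (\<omega> * t) * Cg t - cos (\<omega> * t) * Sg t) / Ep t"
proof -
  have pc: "continuous_on {0..} p" by (rule deriv_imp_cont[of _ _ p']) (use pd in auto)
  have xc: "continuous_on {0..} x" by (rule deriv_imp_cont[of _ _ x']) (use xd in auto)
  define P where "P t = integral {0..t} p" for t
  have Pd: "(P has_real_derivative p t) (at t within {0..})" if "t \<ge> 0" for t
    unfolding P_def by (rule integral_deriv_Ici[OF pc that])
  have Pc: "continuous_on {0..} P" by (rule deriv_imp_cont[of _ _ p]) (use Pd in auto)
  have Ep_eq: "Ep = (\<lambda>t. exp (P t / 2))" unfolding Ep_def P_def ..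
  have Epd: "(Ep has_real_derivative Ep t * (p t / 2)) (at t within {0..})" if "t \<ge> 0" for t
    unfolding Ep_eq by (auto intro!: derivative_eq_intros Pd that)
  have Epc: "continuous_on {0..} Ep" unfolding Ep_eq by (intro continuous_intros Pc) auto
  have Ep0: "Ep t > 0" for t unfolding Ep_def by simp
  have Epne: "Ep t \<noteq> 0" for t using Ep0[of t] by simp
  have gc: "continuous_on {0..} g" unfolding g_def by (auto intro!: continuous_intros pc p'c xc y1c)
  have Cd: "(C has_real_derivative Ep t * cos (\<omega> * t) * y1 t) (at t within {0..})" if "t \<ge> 0" for t
    unfolding C_def by (rule integral_deriv_Ici[OF _ that]) (auto intro!: continuous_intros Epc y1c)
  have Sd: "(S has_real_derivative Ep t * sin (\<omega> * t) * y1 t) (at t within {0..})" if "t \<ge> 0" for t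
    unfolding S_def by (rule integral_deriv_Ici[OF _ that]) (auto intro!: continuous_intros Epc y1c)
  have Cgd: "(Cg has_real_derivative Ep t * cos (\<omega> * t) * g t) (at t within {0..})" if "t \<ge> 0" for t
    unfolding Cg_def by (rule integral_deriv_Ici[OF _ that]) (auto intro!: continuous_intros Epc gc)
  have Sgd: "(Sg has_real_derivative Ep t * sin (\<omega> * t) * g t) (at t within {0..})" if "t \<ge> 0" for t
    unfolding Sg_def by (rule integral_deriv_Ici[OF _ that]) (auto intro!: continuous_intros Epc gc)
  define u1 where "u1 t = (cos (\<omega> * t) * C t + sin (\<omega> * t) * S t) / Ep t" for t
  define u2 where "u2 t = (sin (\<omega> * t) * C t - cos (\<omega> * t) * S t) / Ep t" for t
  have sc: "sin (\<omega> * t) ^ 2 + cos (\<omega> * t) ^ 2 = 1" for t by simp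
  have u1d: "(u1 has_real_derivative (- (p t / 2) * u1 t - \<omega> * u2 t + y1 t)) (at t within {0..})" if "t \<ge> 0" for t
  proof -
    have "(u1 has_real_derivative ((-\<omega> * sin (\<omega> * t) * C t + cos (\<omega> * t) * (Ep t * cos (\<omega> * t) * y1 t)
          + \<omega> * cos (\<omega> * t) * S t + sin (\<omega> * t) * (Ep t * sin (\<omega> * t) * y1 t)) * Ep t
          - (cos (\<omega> * t) * C t + sin (\<omega> * t) * S t) * (Ep t * (p t / 2))) / (Ep t * Ep t))
          (at t within {0..})"
      unfolding u1_def
      by (rule derivative_eq_intros Cd[OF that] Sd[OF that] Epd[OF that] refl | simp add: Epne)+
    moreover have "((-\<omega> * sin (\<omega> * t) * C t + cos (\<omega> * t) * (Ep t * cos (\<omega> * t) * y1 t)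
          + \<omega> * cos (\<omega> * t) * S t + sin (\<omega> * t) * (Ep t * sin (\<omega> * t) * y1 t)) * Ep t
          - (cos (\<omega> * t) * C t + sin (\<omega> * t) * S t) * (Ep t * (p t / 2))) / (Ep t * Ep t)
          = - (p t / 2) * u1 t - \<omega> * u2 t + y1 t"
      unfolding u1_def u2_def by (rule alg1[OF Epne sc])
    ultimately show ?thesis by simp
  qed
  have u2d: "(u2 has_real_derivative (- (p t / 2) * u2 t + \<omega> * u1 t)) (at t within {0..})" if "t \<ge> 0" for t
  proof -
    have "(u2 has_real_derivative ((\<omega> * cos (\<omega> * t) * C t + sin (\<omega> * t) * (Ep t * cos (\<omega> * t) * y1 t)
          + \<omega> * sin (\<omega> * t) * S t - cos (\<omega> * t) * (Ep t * sin (\<omega> * t) * y1 t)) * Ep t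
          - (sin (\<omega> * t) * C t - cos (\<omega> * t) * S t) * (Ep t * (p t / 2))) / (Ep t * Ep t))
          (at t within {0..})"
      unfolding u2_def
      by (rule derivative_eq_intros Cd[OF that] Sd[OF that] Epd[OF that] refl | simp add: Epne)+
    moreover have "((\<omega> * cos (\<omega> * t) * C t + sin (\<omega> * t) * (Ep t * cos (\<omega> * t) * y1 t)
          + \<omega> * sin (\<omega> * t) * S t - cos (\<omega> * t) * (Ep t * sin (\<omega> * t) * y1 t)) * Ep t
          - (sin (\<omega> * t) * C t - cos (\<omega> * t) * S t) * (Ep t * (p t / 2))) / (Ep t * Ep t)
          = - (p t / 2) * u2 t + \<omega> * u1 t"
      unfolding u1_def u2_def by (rule alg2[OF Epne])
    ultimately show ?thesis by simp
  qed
  define a where "a t = (x' t - y1 t) + p t / 2 * x t - \<omega>^2 * u1 t + \<omega> * u2 t" for t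
  define bb where "bb t = \<omega> * (x t - u1 t - \<omega> * u2 t)" for t
  have bbd: "(bb has_real_derivative (- (p t / 2) * bb t + \<omega> * a t)) (at t within {0..})" if "t \<ge> 0" for t
  proof -
    have "(bb has_real_derivative \<omega> * (x' t - (- (p t / 2) * u1 t - \<omega> * u2 t + y1 t) - \<omega> * (- (p t / 2) * u2 t + \<omega> * u1 t)))
          (at t within {0..})"
      unfolding bb_def
      by (rule derivative_eq_intros xd[OF that] u1d[OF that] u2d[OF that] refl | simp add: algebra_simps)+
    moreover have "\<omega> * (x' t - (- (p t / 2) * u1 t - \<omega> * u2 t + y1 t) - \<omega> * (- (p t / 2) * u2 t + \<omega> * u1 t))
        = - (p t / 2) * bb t + \<omega> * a t"
      unfolding a_def bb_def by (simp add: algebra_simps power2_eq_square)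
    ultimately show ?thesis by simp
  qed
  have ad: "(a has_real_derivative (- (p t / 2) * a t - \<omega> * bb t + g t)) (at t within {0..})" if "t \<ge> 0" for t
  proof -
    have "(a has_real_derivative (\<omega>^2 * y1 t - p t * x' t - \<omega>^2 * x t) + (p' t / 2 * x t + p t / 2 * x' t)
           - \<omega>^2 * (- (p t / 2) * u1 t - \<omega> * u2 t + y1 t) + \<omega> * (- (p t / 2) * u2 t + \<omega> * u1 t))
          (at t within {0..})"
      unfolding a_def
      by (rule derivative_eq_intros wd[OF that] pd[OF that] xd[OF that] u1d[OF that] u2d[OF that] refl | simp)+
    moreover have "(\<omega>^2 * y1 t - p t * x' t - \<omega>^2 * x t) + (p' t / 2 * x t + p t / 2 * x' t)
           - \<omega>^2 * (- (p t / 2) * u1 t - \<omega> * u2 t + y1 t) + \<omega> * (- (p t / 2) * u2 t + \<omega> * u1 t)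
        = - (p t / 2) * a t - \<omega> * bb t + g t"
      unfolding a_def bb_def g_def by (simp add: algebra_simps power2_eq_square)
    ultimately show ?thesis by simp
  qed
  define al where "al t = Ep t * (a t * cos (\<omega> * t) + bb t * sin (\<omega> * t))" for t
  define be where "be t = Ep t * (- a t * sin (\<omega> * t) + bb t * cos (\<omega> * t))" for t
  have ald: "(al has_real_derivative Ep t * cos (\<omega> * t) * g t) (at t within {0..})" if "t \<ge> 0" for t
  proof -
    have "(al has_real_derivative Ep t * (p t / 2) * (a t * cos (\<omega> * t) + bb t * sin (\<omega> * t))
       + Ep t * ((- (p t / 2) * a t - \<omega> * bb t + g t) * cos (\<omega> * t) + a t * (- sin (\<omega> * t) * \<omega>)
          + ((- (p t / 2) * bb t + \<omega> * a t) * sin (\<omega> * t) + bb t * (cos (\<omega> * t) * \<omega>))))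
          (at t within {0..})"
      unfolding al_def
      by (rule derivative_eq_intros Epd[OF that] ad[OF that] bbd[OF that] refl | simp add: algebra_simps)+
    moreover have "Ep t * (p t / 2) * (a t * cos (\<omega> * t) + bb t * sin (\<omega> * t))
       + Ep t * ((- (p t / 2) * a t - \<omega> * bb t + g t) * cos (\<omega> * t) + a t * (- sin (\<omega> * t) * \<omega>)
          + ((- (p t / 2) * bb t + \<omega> * a t) * sin (\<omega> * t) + bb t * (cos (\<omega> * t) * \<omega>)))
       = Ep t * cos (\<omega> * t) * g t"
      by (simp add: algebra_simps)
    ultimately show ?thesis by simp
  qed
  have bed: "(be has_real_derivative - (Ep t * sin (\<omega> * t) * g t)) (at t within {0..})" if "t \<ge> 0" for t
  proof -
    have "(be has_real_derivative Ep t * (p t / 2) * (- a t * sin (\<omega> * t) + bb t * cos (\<omega> * t))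
       + Ep t * (- (- (p t / 2) * a t - \<omega> * bb t + g t) * sin (\<omega> * t) - a t * (cos (\<omega> * t) * \<omega>)
          + ((- (p t / 2) * bb t + \<omega> * a t) * cos (\<omega> * t) + bb t * (- sin (\<omega> * t) * \<omega>))))
          (at t within {0..})"
      unfolding be_def
      by (rule derivative_eq_intros Epd[OF that] ad[OF that] bbd[OF that] refl | simp add: algebra_simps)+
    moreover have "Ep t * (p t / 2) * (- a t * sin (\<omega> * t) + bb t * cos (\<omega> * t))
       + Ep t * (- (- (p t / 2) * a t - \<omega> * bb t + g t) * sin (\<omega> * t) - a t * (cos (\<omega> * t) * \<omega>)
          + ((- (p t / 2) * bb t + \<omega> * a t) * cos (\<omega> * t) + bb t * (- sin (\<omega> * t) * \<omega>)))
       = - (Ep t * sin (\<omega> * t) * g t)"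
      by (simp add: algebra_simps)
    ultimately show ?thesis by simp
  qed
  have C0: "C 0 = 0" "S 0 = 0" "Cg 0 = 0" "Sg 0 = 0" unfolding C_def S_def Cg_def Sg_def by simp_all
  have a0: "a 0 = 0" "bb 0 = 0" unfolding a_def bb_def u1_def u2_def using C0 x0 x'0 y10 by simp_all
  have "al t = Cg t"
    by (rule deriv_unique0[OF ald Cgd _ t]) (simp_all add: al_def a0 C0)
  moreover have "be t = - Sg t"
  proof (rule deriv_unique0[OF bed _ _ t])
    show "((\<lambda>t. - Sg t) has_real_derivative - (Ep s * sin (\<omega> * s) * g s)) (at s within {0..})" if "s \<ge> 0" for s
      by (rule derivative_eq_intros Sgd[OF that] refl)+
  qed (simp_all add: be_def a0 C0)
  moreover have "bb t = (al t * sin (\<omega> * t) + be t * cos (\<omega> * t)) / Ep t"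
    unfolding al_def be_def by (rule alg3[OF sc Epne])
  ultimately have "bb t = (sin (\<omega> * t) * Cg t - cos (\<omega> * t) * Sg t) / Ep t"
    by (simp add: algebra_simps)
  moreover have "bb t = \<omega> * (x t - ((\<omega> * sin (\<omega> * t) + cos (\<omega> * t)) * C t + (sin (\<omega> * t) - \<omega> * cos (\<omega> * t)) * S t) / Ep t)"
    unfolding bb_def u1_def u2_def using Epne[of t] by (simp add: field_simps)
  ultimately show ?thesis by simp
qed

lemma int_split0:
  fixes h :: "real \<Rightarrow> real"
  assumes "continuous_on {0..} h" "0 \<le> T" "T \<le> t"
  shows "integral {0..t} h = integral {0..T} h + integral {T..t} h"
proof -
  have "h integrable_on {0..t}"
    by (rule integrable_continuous_real) (rule continuous_on_subset[OF assms(1)], auto)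
  then show ?thesis using Henstock_Kurzweil_Integration.integral_combine[OF assms(2,3)] by metis
qed

lemma int_nonneg0:
  fixes h :: "real \<Rightarrow> real"
  assumes "continuous_on {0..} h" "0 \<le> T" "\<And>s. s \<ge> 0 \<Longrightarrow> h s \<ge> 0"
  shows "integral {T..t} h \<ge> 0"
proof (cases "T \<le> t")
  case True
  have "h integrable_on {T..t}"
    by (rule integrable_continuous_real) (rule continuous_on_subset[OF assms(1)], use assms in auto)
  then show ?thesis using assms by (intro integral_nonneg) auto
qed simp

lemma Gamma_lim:
  fixes Ep k :: "real \<Rightarrow> real"
  assumes Epc: "continuous_on {0..} Ep" and Ep1: "\<And>t. t \<ge> 0 \<Longrightarrow> Ep t \<ge> 1"
    and Eplim: "((\<lambda>t. 1 / Ep t) \<longlongrightarrow> 0) at_top"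
    and kc: "continuous_on {0..} k" and k0: "\<And>s. s \<ge> 0 \<Longrightarrow> k s \<ge> 0"
    and tail: "\<And>e. e > 0 \<Longrightarrow> \<exists>T\<ge>0. \<forall>t\<ge>T. integral {T..t} (\<lambda>s. Ep s * k s) \<le> e * Ep t"
  shows "((\<lambda>t. integral {0..t} (\<lambda>s. Ep s * k s) / Ep t) \<longlongrightarrow> 0) at_top"
proof (rule tendstoI)
  fix e :: real assume e: "e > 0"
  have hc: "continuous_on {0..} (\<lambda>s. Ep s * k s)" by (rule continuous_on_mult[OF Epc kc])
  have h0: "\<And>s. s \<ge> 0 \<Longrightarrow> Ep s * k s \<ge> 0" proof - fix s :: real assume "s \<ge> 0" then show "Ep s * k s \<ge> 0" using Ep1[of s] k0[of s] by simp qed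
  obtain T where T: "T \<ge> 0" "\<And>t. t \<ge> T \<Longrightarrow> integral {T..t} (\<lambda>s. Ep s * k s) \<le> e / 2 * Ep t"
    using tail[of "e/2"] e by auto
  define K where "K = integral {0..T} (\<lambda>s. Ep s * k s)"
  have "((\<lambda>t. K * (1 / Ep t)) \<longlongrightarrow> K * 0) at_top" by (intro tendsto_intros Eplim)
  then have "eventually (\<lambda>t. \<bar>K * (1 / Ep t)\<bar> < e / 2) at_top"
    using e tendstoD[of _ _ _ "e/2"] by (force simp: dist_real_def)
  moreover have "eventually (\<lambda>t. t \<ge> T) at_top" by simp
  ultimately show "eventually (\<lambda>t. dist (integral {0..t} (\<lambda>s. Ep s * k s) / Ep t) 0 < e) at_top"
  proof eventually_elim
    case (elim t)
    have Ept: "Ep t \<ge> 1" using Ep1 T elim by auto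
    have "integral {0..t} (\<lambda>s. Ep s * k s) = K + integral {T..t} (\<lambda>s. Ep s * k s)"
      unfolding K_def using int_split0[OF hc T(1) elim(2)] .
    also have "\<dots> \<le> K + e / 2 * Ep t" using T(2)[OF elim(2)] by simp
    finally have up: "integral {0..t} (\<lambda>s. Ep s * k s) / Ep t \<le> K * (1 / Ep t) + e / 2"
      using Ept by (simp add: field_simps)
    have "integral {0..t} (\<lambda>s. Ep s * k s) \<ge> 0" using int_nonneg0[OF hc _ h0, of 0 t] by simp
    then have lo: "integral {0..t} (\<lambda>s. Ep s * k s) / Ep t \<ge> 0" using Ept by simp
    have "K * (1 / Ep t) < e / 2" using elim(1) by linarith
    then have "integral {0..t} (\<lambda>s. Ep s * k s) / Ep t < e" using up by linarith
    then show ?case unfolding dist_real_def diff_zero abs_of_nonneg[OF lo] .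
  qed
qed

lemma cont_int_on:
  fixes h :: "real \<Rightarrow> real"
  assumes "continuous_on {0..} h" "0 \<le> T"
  shows "h integrable_on {T..t}"
  by (rule integrable_continuous_real) (rule continuous_on_subset[OF assms(1)], use assms in auto)

lemma H1:
  fixes Ep c X \<theta> :: "real \<Rightarrow> real"
  assumes Epc: "continuous_on {0..} Ep" and Epm: "\<And>s t. 0 \<le> s \<Longrightarrow> s \<le> t \<Longrightarrow> Ep s \<le> Ep t"
    and Ep0: "\<And>t. t \<ge> 0 \<Longrightarrow> Ep t \<ge> 0"
    and cc: "continuous_on {0..} c" and c0: "\<And>s. s \<ge> 0 \<Longrightarrow> c s \<ge> 0"
    and Xc: "continuous_on {0..} X"
    and tail: "\<And>T t. 0 \<le> T \<Longrightarrow> T \<le> t \<Longrightarrow> integral {T..t} c \<le> \<theta> T"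
    and T: "0 \<le> T" "T \<le> t" and M: "\<And>r. T \<le> r \<Longrightarrow> r \<le> t \<Longrightarrow> \<bar>X r\<bar> \<le> M"
  shows "integral {T..t} (\<lambda>s. Ep s * (c s * \<bar>X s\<bar>)) \<le> Ep t * M * \<theta> T"
proof -
  have M0: "M \<ge> 0" using M[of T] T by auto
  have "integral {T..t} (\<lambda>s. Ep s * (c s * \<bar>X s\<bar>)) \<le> integral {T..t} (\<lambda>s. Ep t * M * c s)"
  proof (rule integral_le)
    show "(\<lambda>s. Ep s * (c s * \<bar>X s\<bar>)) integrable_on {T..t}"
      by (rule cont_int_on[OF _ T(1)]) (intro continuous_intros Epc cc Xc)
    show "(\<lambda>s. Ep t * M * c s) integrable_on {T..t}"
      by (rule cont_int_on[OF _ T(1)]) (intro continuous_intros cc)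
    fix s assume s: "s \<in> {T..t}"
    then have s0: "s \<ge> 0" using T by auto
    have "Ep s * (c s * \<bar>X s\<bar>) \<le> Ep t * (c s * M)"
      using s s0 M[of s] Epm[of s t] Ep0[of s] c0[of s]
      by (intro mult_mono mult_left_mono) auto
    then show "Ep s * (c s * \<bar>X s\<bar>) \<le> Ep t * M * c s" by (simp add: algebra_simps)
  qed
  also have "\<dots> = Ep t * M * integral {T..t} c" by simp
  also have "\<dots> \<le> Ep t * M * \<theta> T"
    using tail[OF T] Ep0[of t] T M0 by (intro mult_left_mono) auto
  finally show ?thesis .
qed

lemma x_lim:
  fixes Ep c x \<theta> \<delta> :: "real \<Rightarrow> real" and \<kappa> :: real
  assumes Epc: "continuous_on {0..} Ep" and Epm: "\<And>s t. 0 \<le> s \<Longrightarrow> s \<le> t \<Longrightarrow> Ep s \<le> Ep t"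
    and Ep1: "\<And>t. t \<ge> 0 \<Longrightarrow> Ep t \<ge> 1"
    and Eplim: "((\<lambda>t. 1 / Ep t) \<longlongrightarrow> 0) at_top"
    and cc: "continuous_on {0..} c" and c0: "\<And>s. s \<ge> 0 \<Longrightarrow> c s \<ge> 0"
    and xc: "continuous_on {0..} x"
    and tail: "\<And>T t. 0 \<le> T \<Longrightarrow> T \<le> t \<Longrightarrow> integral {T..t} c \<le> \<theta> T"
    and \<theta>lim: "(\<theta> \<longlongrightarrow> 0) at_top" and \<delta>lim: "(\<delta> \<longlongrightarrow> 0) at_top" and \<kappa>: "\<kappa> \<ge> 0"
    and bnd: "\<And>t. t \<ge> 0 \<Longrightarrow> \<bar>x t\<bar> \<le> \<delta> t + \<kappa> * (integral {0..t} (\<lambda>s. Ep s * (c s * \<bar>x s\<bar>)) / Ep t)"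
  shows "(x \<longlongrightarrow> 0) at_top"
proof -
  have Ep0: "\<And>t. t \<ge> 0 \<Longrightarrow> Ep t \<ge> 0" using Ep1 by (meson order_trans zero_le_one)
  define I where "I T = integral {0..T} (\<lambda>s. Ep s * (c s * \<bar>x s\<bar>))" for T
  have hc: "continuous_on {0..} (\<lambda>s. Ep s * (c s * \<bar>x s\<bar>))" by (intro continuous_intros Epc cc xc)
  have I0: "I T \<ge> 0" if "T \<ge> 0" for T
    unfolding I_def using Ep0 c0 by (intro int_nonneg0[OF hc]) (auto intro!: mult_nonneg_nonneg)
  have key: "\<bar>x t\<bar> \<le> \<delta> t + \<kappa> * I T / Ep t + \<kappa> * M * \<theta> T"
    if T: "0 \<le> T" "T \<le> t" and M: "\<And>r. T \<le> r \<Longrightarrow> r \<le> t \<Longrightarrow> \<bar>x r\<bar> \<le> M" for T t M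
  proof -
    have t0: "t \<ge> 0" using T by auto
    have Ept: "Ep t \<ge> 1" using Ep1[OF t0] .
    have "integral {0..t} (\<lambda>s. Ep s * (c s * \<bar>x s\<bar>)) = I T + integral {T..t} (\<lambda>s. Ep s * (c s * \<bar>x s\<bar>))"
      unfolding I_def by (rule int_split0[OF hc T])
    also have "\<dots> \<le> I T + Ep t * M * \<theta> T"
      using H1[OF Epc Epm Ep0 cc c0 xc tail T M] by simp
    finally have "integral {0..t} (\<lambda>s. Ep s * (c s * \<bar>x s\<bar>)) / Ep t \<le> I T / Ep t + M * \<theta> T"
      using Ept by (simp add: field_simps)
    then have "\<kappa> * (integral {0..t} (\<lambda>s. Ep s * (c s * \<bar>x s\<bar>)) / Ep t) \<le> \<kappa> * (I T / Ep t + M * \<theta> T)"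
      using \<kappa> by (intro mult_left_mono)
    then show ?thesis using bnd[OF t0] by (simp add: algebra_simps)
  qed
  obtain N1 where N1: "\<And>T. T \<ge> N1 \<Longrightarrow> \<kappa> * \<theta> T \<le> 1/2"
  proof -
    have "((\<lambda>T. \<kappa> * \<theta> T) \<longlongrightarrow> \<kappa> * 0) at_top" by (intro tendsto_intros \<theta>lim)
    then have "eventually (\<lambda>T. \<kappa> * \<theta> T < 1/2) at_top" by (intro order_tendstoD) auto
    then obtain N where N: "\<And>T. T \<ge> N \<Longrightarrow> \<kappa> * \<theta> T < 1/2" unfolding eventually_at_top_linorder by blast
    show ?thesis by (rule that[of N]) (use N in \<open>auto intro: less_imp_le\<close>)
  qed
  obtain N2 where N2: "\<And>t. t \<ge> N2 \<Longrightarrow> \<delta> t \<le> 1"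
  proof -
    have "eventually (\<lambda>t. \<delta> t < 1) at_top" using \<delta>lim by (intro order_tendstoD) auto
    then obtain N where N: "\<And>T. T \<ge> N \<Longrightarrow> \<delta> T < 1" unfolding eventually_at_top_linorder by blast
    show ?thesis by (rule that[of N]) (use N in \<open>auto intro: less_imp_le\<close>)
  qed
  define T0 where "T0 = max 0 (max N1 N2)"
  have T0: "T0 \<ge> 0" "T0 \<ge> N1" "T0 \<ge> N2" unfolding T0_def by auto
  obtain s0 where s0: "s0 \<in> {0..T0}" "\<And>r. r \<in> {0..T0} \<Longrightarrow> \<bar>x r\<bar> \<le> \<bar>x s0\<bar>"
    using continuous_attains_sup[of "{0..T0}" "\<lambda>r. \<bar>x r\<bar>"] T0(1)
      continuous_on_subset[OF continuous_on_rabs[OF xc], of "{0..T0}"] by auto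
  define B where "B = max \<bar>x s0\<bar> (2 + 2 * \<kappa> * I T0)"
  have bounded: "\<bar>x t\<bar> \<le> B" if t: "t \<ge> 0" for t
  proof -
    obtain s where s: "s \<in> {0..t}" "\<And>r. r \<in> {0..t} \<Longrightarrow> \<bar>x r\<bar> \<le> \<bar>x s\<bar>"
      using continuous_attains_sup[of "{0..t}" "\<lambda>r. \<bar>x r\<bar>"] t
        continuous_on_subset[OF continuous_on_rabs[OF xc], of "{0..t}"] by auto
    show ?thesis
    proof (cases "s \<le> T0")
      case True
      then have "\<bar>x s\<bar> \<le> \<bar>x s0\<bar>" using s(1) s0(2) by auto
      then show ?thesis using s(2)[of t] t unfolding B_def by auto
    next
      case False
      have k: "\<bar>x s\<bar> \<le> \<delta> s + \<kappa> * I T0 / Ep s + \<kappa> * \<bar>x s\<bar> * \<theta> T0"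
      proof (rule key)
        show "0 \<le> T0" "T0 \<le> s" using T0(1) False by auto
        fix r assume "T0 \<le> r" "r \<le> s"
        then show "\<bar>x r\<bar> \<le> \<bar>x s\<bar>" using s T0(1) by (intro s(2)) auto
      qed
      have "\<delta> s \<le> 1" using N2 T0 False by auto
      moreover have "\<kappa> * I T0 / Ep s \<le> \<kappa> * I T0"
      proof -
        have "Ep s \<ge> 1" using Ep1 T0 False by auto
        moreover have "\<kappa> * I T0 \<ge> 0" using \<kappa> I0[OF T0(1)] by simp
        ultimately have "\<kappa> * I T0 / Ep s \<le> \<kappa> * I T0 / 1" by (intro divide_left_mono) auto
        then show ?thesis by simp
      qed
      moreover have "\<kappa> * \<bar>x s\<bar> * \<theta> T0 \<le> \<bar>x s\<bar> / 2"
      proof -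
        have "\<bar>x s\<bar> * (\<kappa> * \<theta> T0) \<le> \<bar>x s\<bar> * (1/2)"
          by (rule mult_left_mono[OF N1[OF T0(2)] abs_ge_zero])
        then show ?thesis by (simp add: mult_ac)
      qed
      ultimately have "\<bar>x s\<bar> \<le> 2 + 2 * \<kappa> * I T0" using k by linarith
      then show ?thesis using s(2)[of t] t unfolding B_def by auto
    qed
  qed
  have B0: "B \<ge> 0" unfolding B_def by auto
  show ?thesis
  proof (rule tendstoI)
    fix e :: real assume e: "e > 0"
    have "((\<lambda>T. \<kappa> * B * \<theta> T) \<longlongrightarrow> \<kappa> * B * 0) at_top" by (intro tendsto_intros \<theta>lim)
    then have "eventually (\<lambda>T. \<kappa> * B * \<theta> T < e / 3) at_top" using e by (intro order_tendstoD) auto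
    then obtain N where N: "\<And>T. T \<ge> N \<Longrightarrow> \<kappa> * B * \<theta> T < e / 3" unfolding eventually_at_top_linorder by blast
    define T where "T = max 0 N"
    have T: "T \<ge> 0" "\<kappa> * B * \<theta> T < e / 3" unfolding T_def using N by auto
    have "((\<lambda>t. \<kappa> * I T * (1 / Ep t)) \<longlongrightarrow> \<kappa> * I T * 0) at_top" by (intro tendsto_intros Eplim)
    then have ev1: "eventually (\<lambda>t. \<kappa> * I T * (1 / Ep t) < e / 3) at_top" using e by (intro order_tendstoD) auto
    have ev2: "eventually (\<lambda>t. \<delta> t < e / 3) at_top" using e \<delta>lim by (intro order_tendstoD) auto
    have ev3: "eventually (\<lambda>t. t \<ge> T) at_top" by simp
    show "eventually (\<lambda>t. dist (x t) 0 < e) at_top"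
      using ev1 ev2 ev3
    proof eventually_elim
      case (elim t)
      have "\<bar>x t\<bar> \<le> \<delta> t + \<kappa> * I T / Ep t + \<kappa> * B * \<theta> T"
        using key[OF T(1) elim(3), of B] bounded T elim by auto
      moreover have "\<kappa> * I T / Ep t = \<kappa> * I T * (1 / Ep t)" by simp
      ultimately have "\<bar>x t\<bar> < e" using elim(1,2) T(2) by linarith
      then show ?case by (simp add: dist_real_def)
    qed
  qed
qed

lemma lint_eq_int:
  fixes h :: "real \<Rightarrow> real"
  assumes "continuous_on {a..b} h"
  shows "(LINT s:{a..b}|lborel. h s) = integral {a..b} h"
proof -
  have "set_integrable lborel {a..b} h"
    unfolding set_integrable_def using assms by (intro borel_integrable_compact) auto
  then show ?thesis by (rule set_borel_integral_eq_integral(2))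
qed

lemma lint_set_integrable:
  fixes h :: "real \<Rightarrow> real"
  assumes "continuous_on {a..b} h"
  shows "set_integrable lborel {a..b} h"
  unfolding set_integrable_def using assms by (intro borel_integrable_compact) auto

lemma y1_expr:
  fixes \<omega> :: real and f :: "real \<Rightarrow> real"
  assumes fint: "\<And>t. t \<ge> 0 \<Longrightarrow> set_integrable lborel {0..t} f" and t: "t \<ge> 0"
  shows "set_integrable lborel {0..t} (\<lambda>s. exp (\<omega>^2 * s) * f s)"
    and "y1fun \<omega> f t = exp (- (\<omega>^2) * t) * integral {0..t} (\<lambda>s. exp (\<omega>^2 * s) * f s)"
proof -
  have si: "set_integrable lborel {0..b} (\<lambda>s. exp (\<omega>^2 * s) * f s)" if b: "b \<ge> 0" for b
  proof -
    have fi: "integrable lborel (\<lambda>s. indicator {0..b} s *\<^sub>R f s)" using fint[OF b] unfolding set_integrable_def .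
    have [measurable]: "(\<lambda>s. indicator {0..b} s *\<^sub>R f s) \<in> borel_measurable lborel"
      using fi by (rule borel_measurable_integrable)
    show ?thesis unfolding set_integrable_def
    proof (rule Bochner_Integration.integrable_bound[where f="\<lambda>s. exp (\<omega>^2 * b) * (indicator {0..b} s *\<^sub>R f s)"])
      show "integrable lborel (\<lambda>s. exp (\<omega>^2 * b) * (indicator {0..b} s *\<^sub>R f s))" using fi by simp
      have "(\<lambda>s. indicator {0..b} s *\<^sub>R (exp (\<omega>^2 * s) * f s)) = (\<lambda>s. exp (\<omega>^2 * s) * (indicator {0..b} s *\<^sub>R f s))"
        by (auto simp: indicator_def)
      moreover have "(\<lambda>s. exp (\<omega>^2 * s) * (indicator {0..b} s *\<^sub>R f s)) \<in> borel_measurable lborel" by measurable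
      ultimately show "(\<lambda>s. indicator {0..b} s *\<^sub>R (exp (\<omega>^2 * s) * f s)) \<in> borel_measurable lborel" by simp
      show "AE s in lborel. norm (indicator {0..b} s *\<^sub>R (exp (\<omega>^2 * s) * f s)) \<le> norm (exp (\<omega>^2 * b) * (indicator {0..b} s *\<^sub>R f s))"
      proof (rule AE_I2)
        fix s
        show "norm (indicator {0..b} s *\<^sub>R (exp (\<omega>^2 * s) * f s)) \<le> norm (exp (\<omega>^2 * b) * (indicator {0..b} s *\<^sub>R f s))"
        proof (cases "s \<in> {0..b}")
          case True
          then have "exp (\<omega>^2 * s) \<le> exp (\<omega>^2 * b)" by (auto intro: mult_left_mono)
          then show ?thesis using True by (simp add: abs_mult mult_right_mono)
        qed simp
      qed
    qed
  qed
  show "set_integrable lborel {0..t} (\<lambda>s. exp (\<omega>^2 * s) * f s)" by (rule si[OF t])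
  have "y1fun \<omega> f t = (LINT s:{0..t}|lborel. exp (- (\<omega>^2) * t) * (exp (\<omega>^2 * s) * f s))"
    unfolding y1fun_def
    by (intro set_lebesgue_integral_cong) (auto simp: algebra_simps simp flip: exp_add)
  also have "\<dots> = exp (- (\<omega>^2) * t) * (LINT s:{0..t}|lborel. exp (\<omega>^2 * s) * f s)"
    by (simp add: set_integral_mult_right)
  also have "(LINT s:{0..t}|lborel. exp (\<omega>^2 * s) * f s) = integral {0..t} (\<lambda>s. exp (\<omega>^2 * s) * f s)"
    by (rule set_borel_integral_eq_integral(2)[OF si[OF t]])
  finally show "y1fun \<omega> f t = exp (- (\<omega>^2) * t) * integral {0..t} (\<lambda>s. exp (\<omega>^2 * s) * f s)" .
qed

lemma y1_cont:
  fixes \<omega> :: real and f :: "real \<Rightarrow> real"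
  assumes fint: "\<And>t. t \<ge> 0 \<Longrightarrow> set_integrable lborel {0..t} f"
  shows "continuous_on {0..} (y1fun \<omega> f)" and "y1fun \<omega> f 0 = 0"
proof -
  show "y1fun \<omega> f 0 = 0" using y1_expr(2)[OF fint, of 0 \<omega>] by simp
  show "continuous_on {0..} (y1fun \<omega> f)"
  proof (rule cont_Ici)
    fix b :: real
    show "continuous_on {0..b} (y1fun \<omega> f)"
    proof (cases "b \<ge> 0")
      case True
      have "(\<lambda>s. exp (\<omega>^2 * s) * f s) integrable_on {0..b}"
        by (rule set_borel_integral_eq_integral(1)[OF y1_expr(1)[OF fint True]])
      then have "continuous_on {0..b} (\<lambda>t. integral {0..t} (\<lambda>s. exp (\<omega>^2 * s) * f s))"
        by (rule indefinite_integral_continuous_1)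
      then have "continuous_on {0..b} (\<lambda>t. exp (- (\<omega>^2) * t) * integral {0..t} (\<lambda>s. exp (\<omega>^2 * s) * f s))"
        by (intro continuous_intros)
      then show ?thesis
        by (rule continuous_on_eq) (use y1_expr(2)[OF fint] in auto)
    qed simp
  qed
qed

lemma J_conv:
  fixes \<omega> t :: real and p y1 Ep :: "real \<Rightarrow> real"
  assumes pc: "continuous_on {0..} p" and y1c: "continuous_on {0..} y1" and t: "t \<ge> 0"
    and Ep_def: "Ep = (\<lambda>t. exp (integral {0..t} p / 2))"
  shows "(LINT s:{0..t}|lborel. Efun p t s * L1fun \<omega> t s * y1 s)
     = ((\<omega> * sin (\<omega> * t) + cos (\<omega> * t)) * integral {0..t} (\<lambda>s. Ep s * cos (\<omega> * s) * y1 s)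
        + (sin (\<omega> * t) - \<omega> * cos (\<omega> * t)) * integral {0..t} (\<lambda>s. Ep s * sin (\<omega> * s) * y1 s)) / Ep t"
proof -
  have Pd: "((\<lambda>t. integral {0..t} p) has_real_derivative p t) (at t within {0..})" if "t \<ge> 0" for t
    by (rule integral_deriv_Ici[OF pc that])
  have Pc: "continuous_on {0..} (\<lambda>t. integral {0..t} p)" by (rule deriv_imp_cont[of _ _ p]) (use Pd in auto)
  have Epc: "continuous_on {0..} Ep" unfolding Ep_def by (intro continuous_intros Pc) auto
  have Ep0: "Ep s > 0" for s unfolding Ep_def by simp
  have Epne: "Ep s \<noteq> 0" for s using Ep0[of s] by simp
  have E: "Efun p t s = Ep s / Ep t" if s: "s \<in> {0..t}" for s
  proof -
    have "(LINT \<tau>:{s..t}|lborel. p \<tau>) = integral {s..t} p"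
      by (rule lint_eq_int) (rule continuous_on_subset[OF pc], use s in auto)
    also have "\<dots> = integral {0..t} p - integral {0..s} p"
      using int_split0[OF pc, of s t] s by simp
    finally show ?thesis unfolding Efun_def Ep_def
      by (simp add: exp_diff[symmetric] algebra_simps diff_divide_distrib)
  qed
  define G where "G s = ((\<omega> * sin (\<omega> * t) + cos (\<omega> * t)) * (Ep s * cos (\<omega> * s) * y1 s)
        + (sin (\<omega> * t) - \<omega> * cos (\<omega> * t)) * (Ep s * sin (\<omega> * s) * y1 s)) / Ep t" for s
  have "(LINT s:{0..t}|lborel. Efun p t s * L1fun \<omega> t s * y1 s) = (LINT s:{0..t}|lborel. G s)"
  proof (rule set_lebesgue_integral_cong)
    show "\<forall>s. s \<in> {0..t} \<longrightarrow> Efun p t s * L1fun \<omega> t s * y1 s = G s"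
    proof (intro allI impI)
      fix s assume s: "s \<in> {0..t}"
      show "Efun p t s * L1fun \<omega> t s * y1 s = G s"
        unfolding E[OF s] G_def L1fun_def right_diff_distrib sin_diff cos_diff
        by (simp add: field_simps)
    qed
  qed simp
  also have "\<dots> = integral {0..t} G"
    by (rule lint_eq_int) (unfold G_def, intro continuous_intros continuous_on_subset[OF Epc] continuous_on_subset[OF y1c], auto simp: Epne)
  also have "\<dots> = ((\<omega> * sin (\<omega> * t) + cos (\<omega> * t)) * integral {0..t} (\<lambda>s. Ep s * cos (\<omega> * s) * y1 s)
        + (sin (\<omega> * t) - \<omega> * cos (\<omega> * t)) * integral {0..t} (\<lambda>s. Ep s * sin (\<omega> * s) * y1 s)) / Ep t"
  proof -
    have i1: "(\<lambda>s. Ep s * cos (\<omega> * s) * y1 s) integrable_on {0..t}"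
      by (rule cont_int_on) (intro continuous_intros Epc y1c, simp)
    have i2: "(\<lambda>s. Ep s * sin (\<omega> * s) * y1 s) integrable_on {0..t}"
      by (rule cont_int_on) (intro continuous_intros Epc y1c, simp)
    show ?thesis unfolding G_def integral_divide
      by (subst integral_add) (auto intro!: integrable_on_mult_right i1 i2)
  qed
  finally show ?thesis .
qed

theorem mainTheorem8:
  fixes \<omega> :: real and p p' f x x' :: "real \<Rightarrow> real"
  assumes omega_pos: "\<omega> > 0"
    and p_deriv: "\<And>t. t \<ge> 0 \<Longrightarrow> (p has_real_derivative p' t) (at t within {0..})"
    and p'_cont: "continuous_on {0..} p'"
    and p_pos: "\<And>t. t \<ge> 0 \<Longrightarrow> p t > 0"
    and p'_neg: "\<And>t. t \<ge> 0 \<Longrightarrow> p' t < 0"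
    and p_int_infinite: "filterlim (\<lambda>t. LINT s:{0..t}|lborel. p s) at_top at_top"
    and p_sq_int: "set_integrable lborel {0..} (\<lambda>t. (p t)^2)"
    and f_loc_int: "\<And>t. t \<ge> 0 \<Longrightarrow> set_integrable lborel {0..t} f"
    and x_deriv: "\<And>t. t \<ge> 0 \<Longrightarrow> (x has_real_derivative x' t) (at t within {0..})"
    and x'_cont: "continuous_on {0..} x'"
    and x_eq: "\<And>t. t \<ge> 0 \<Longrightarrow>
        x' t = x' 0 + (LINT s:{0..t}|lborel. f s - p s * x' s - \<omega>^2 * x s)"
    and x0: "x 0 = 0"
    and x'0: "x' 0 = 0"
    and y1_lim: "((\<lambda>t. y1fun \<omega> f t) \<longlongrightarrow> 0) at_top"
  shows "(x \<longlongrightarrow> 0) at_top \<longleftrightarrow>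
    ((\<lambda>t. LINT s:{0..t}|lborel. Efun p t s * L1fun \<omega> t s * y1fun \<omega> f s) \<longlongrightarrow> 0) at_top"
proof -
  have w: "\<omega> \<noteq> 0" using omega_pos by simp
  have pc: "continuous_on {0..} p" by (rule deriv_imp_cont[of _ _ p']) (use p_deriv in auto)
  have xc: "continuous_on {0..} x" by (rule deriv_imp_cont[of _ _ x']) (use x_deriv in auto)
  define y1 where "y1 = y1fun \<omega> f"
  have y1c: "continuous_on {0..} y1" and y10: "y1 0 = 0"
    unfolding y1_def using y1_cont[OF f_loc_int] by auto
  define P where "P t = integral {0..t} p" for t
  define Ep where "Ep t = exp (P t / 2)" for t
  have Ep_def': "Ep = (\<lambda>t. exp (integral {0..t} p / 2))" unfolding Ep_def P_def ..
  define C where "C t = integral {0..t} (\<lambda>s. Ep s * cos (\<omega> * s) * y1 s)" for t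
  define S where "S t = integral {0..t} (\<lambda>s. Ep s * sin (\<omega> * s) * y1 s)" for t
  define g where "g s = (p s ^ 2 / 4 + p' s / 2) * x s - p s / 2 * y1 s" for s
  define Cg where "Cg t = integral {0..t} (\<lambda>s. Ep s * cos (\<omega> * s) * g s)" for t
  define Sg where "Sg t = integral {0..t} (\<lambda>s. Ep s * sin (\<omega> * s) * g s)" for t
  define J where "J t = (LINT s:{0..t}|lborel. Efun p t s * L1fun \<omega> t s * y1fun \<omega> f s)" for t
  have weq: "x' t - y1 t = integral {0..t} (\<lambda>s. \<omega>^2 * y1 s - p s * x' s - \<omega>^2 * x s)" if t: "t \<ge> 0" for t
  proof -
    have hc: "continuous_on {0..t} (\<lambda>s. p s * x' s + \<omega>^2 * x s)"
      by (intro continuous_intros continuous_on_subset[OF pc] continuous_on_subset[OF x'_cont] continuous_on_subset[OF xc]) auto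
    have y1c': "continuous_on {0..t} y1" by (rule continuous_on_subset[OF y1c]) auto
    have "x' t = (LINT s:{0..t}|lborel. f s - (p s * x' s + \<omega>^2 * x s))"
      using x_eq[OF t] x'0 by (simp add: algebra_simps)
    also have "\<dots> = (LINT s:{0..t}|lborel. f s) - (LINT s:{0..t}|lborel. p s * x' s + \<omega>^2 * x s)"
      by (rule set_integral_diff(2)[OF f_loc_int[OF t] lint_set_integrable[OF hc]])
    finally have e1: "x' t = (LINT s:{0..t}|lborel. f s) - integral {0..t} (\<lambda>s. p s * x' s + \<omega>^2 * x s)"
      using lint_eq_int[OF hc] by simp
    have e2: "\<omega>^2 * integral {0..t} y1 = (LINT s:{0..t}|lborel. f s) - y1 t"
      using y1_identity[OF t w f_loc_int[OF t]] lint_eq_int[OF y1c'] unfolding y1_def by simp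
    have "integral {0..t} (\<lambda>s. \<omega>^2 * y1 s - p s * x' s - \<omega>^2 * x s)
        = integral {0..t} (\<lambda>s. \<omega>^2 * y1 s - (p s * x' s + \<omega>^2 * x s))"
      by (simp add: algebra_simps)
    also have "\<dots> = \<omega>^2 * integral {0..t} y1 - integral {0..t} (\<lambda>s. p s * x' s + \<omega>^2 * x s)"
      by (subst integral_diff)
         (auto intro!: integrable_on_mult_right integrable_continuous_real hc y1c' continuous_intros)
    finally show ?thesis using e1 e2 by simp
  qed
  have wd: "((\<lambda>t. x' t - y1 t) has_real_derivative (\<omega>^2 * y1 t - p t * x' t - \<omega>^2 * x t)) (at t within {0..})"
    if t: "t \<ge> 0" for t
  proof (rule has_field_derivative_transform_within[where d=1])
    show "((\<lambda>t. integral {0..t} (\<lambda>s. \<omega>^2 * y1 s - p s * x' s - \<omega>^2 * x s)) has_real_derivative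
       (\<omega>^2 * y1 t - p t * x' t - \<omega>^2 * x t)) (at t within {0..})"
      by (rule integral_deriv_Ici[OF _ t]) (intro continuous_intros y1c pc x'_cont xc)
  qed (use t weq in auto)
  have repr': "\<omega> * (x t - ((\<omega> * sin (\<omega> * t) + cos (\<omega> * t)) * C t + (sin (\<omega> * t) - \<omega> * cos (\<omega> * t)) * S t) / Ep t)
         = (sin (\<omega> * t) * Cg t - cos (\<omega> * t) * Sg t) / Ep t" if t: "t \<ge> 0" for t
    by (rule repr[where C=C and S=S and g=g and Cg=Cg and Sg=Sg, OF w p_deriv p'_cont x_deriv x'_cont y1c wd x0 x'0 y10 t Ep_def'])
       (simp_all add: C_def S_def g_def Cg_def Sg_def fun_eq_iff)
  have Jeq: "J t = ((\<omega> * sin (\<omega> * t) + cos (\<omega> * t)) * C t + (sin (\<omega> * t) - \<omega> * cos (\<omega> * t)) * S t) / Ep t"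
    if t: "t \<ge> 0" for t
    unfolding J_def C_def S_def y1_def[symmetric] by (rule J_conv[OF pc y1c t Ep_def'])
  have p0: "p s \<ge> 0" if "s \<ge> 0" for s using p_pos[OF that] by simp
  have Pd: "(P has_real_derivative p t) (at t within {0..})" if "t \<ge> 0" for t
    unfolding P_def by (rule integral_deriv_Ici[OF pc that])
  have Pc: "continuous_on {0..} P" by (rule deriv_imp_cont[of _ _ p]) (use Pd in auto)
  have Pm: "P s \<le> P t" if "0 \<le> s" "s \<le> t" for s t
  proof -
    have "P t = P s + integral {s..t} p" unfolding P_def by (rule int_split0[OF pc that])
    moreover have "integral {s..t} p \<ge> 0" by (rule int_nonneg0[OF pc that(1) p0])
    ultimately show ?thesis by simp
  qed
  have P0: "P t \<ge> 0" if "t \<ge> 0" for t using Pm[of 0 t] that by (simp add: P_def)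
  have Epc: "continuous_on {0..} Ep" unfolding Ep_def by (intro continuous_intros Pc) auto
  have Ep1: "Ep t \<ge> 1" if "t \<ge> 0" for t unfolding Ep_def using P0[OF that] by simp
  have Epm: "Ep s \<le> Ep t" if "0 \<le> s" "s \<le> t" for s t unfolding Ep_def using Pm[OF that] by simp
  have Ep0: "Ep t > 0" for t unfolding Ep_def by simp
  have Epd: "(Ep has_real_derivative Ep t * (p t / 2)) (at t within {0..})" if "t \<ge> 0" for t
    unfolding Ep_def[abs_def] by (auto intro!: derivative_eq_intros Pd that)
  have Ptop: "filterlim P at_top at_top"
  proof -
    have "eventually (\<lambda>t. (LINT s:{0..t}|lborel. p s) = P t) at_top"
      using eventually_ge_at_top[of 0]
      by eventually_elim (auto simp: P_def intro!: lint_eq_int continuous_on_subset[OF pc])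
    then show ?thesis using p_int_infinite filterlim_cong by fastforce
  qed
  have Eplim: "((\<lambda>t. 1 / Ep t) \<longlongrightarrow> 0) at_top"
  proof -
    have "filterlim (\<lambda>t. 1/2 * P t) at_top at_top"
      by (rule filterlim_tendsto_pos_mult_at_top[OF tendsto_const _ Ptop]) simp
    then have "filterlim (\<lambda>t. exp (1/2 * P t)) at_top at_top"
      by (rule filterlim_compose[OF exp_at_top])
    then have "((\<lambda>t. inverse (exp (1/2 * P t))) \<longlongrightarrow> 0) at_top"
      by (rule tendsto_inverse_0_at_top)
    moreover have "(\<lambda>t. 1 / Ep t) = (\<lambda>t. inverse (exp (1/2 * P t)))"
      unfolding Ep_def by (auto simp: fun_eq_iff field_simps)
    ultimately show ?thesis by simp
  qed
  define c where "c s = \<bar>p s ^ 2 / 4 + p' s / 2\<bar>" for s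
  have cc: "continuous_on {0..} c" unfolding c_def by (intro continuous_intros pc p'_cont) auto
  have c0: "c s \<ge> 0" for s unfolding c_def by simp
  define Ic where "Ic t = integral {0..t} (\<lambda>s. Ep s * (c s * \<bar>x s\<bar>))" for t
  define Ip where "Ip t = integral {0..t} (\<lambda>s. Ep s * (p s * \<bar>y1 s\<bar>))" for t
  have gc: "continuous_on {0..} g" unfolding g_def by (intro continuous_intros pc p'_cont xc y1c) auto
  have gb: "\<bar>g s\<bar> \<le> c s * \<bar>x s\<bar> + p s * \<bar>y1 s\<bar> / 2" if "s \<ge> 0" for s
  proof -
    have "\<bar>g s\<bar> \<le> \<bar>(p s ^ 2 / 4 + p' s / 2) * x s\<bar> + \<bar>p s / 2 * y1 s\<bar>"
      unfolding g_def by (rule abs_triangle_ineq4)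
    also have "\<dots> = c s * \<bar>x s\<bar> + p s * \<bar>y1 s\<bar> / 2"
      unfolding c_def using p0[OF that] by (simp add: abs_mult)
    finally show ?thesis .
  qed
  have Qb: "\<bar>integral {0..t} (\<lambda>s. Ep s * h (\<omega> * s) * g s)\<bar> \<le> Ic t + Ip t / 2"
    if t: "t \<ge> 0" and hc: "continuous_on UNIV h" and hb: "\<And>u. \<bar>h u\<bar> \<le> 1" for t h
  proof -
    have "norm (integral {0..t} (\<lambda>s. Ep s * h (\<omega> * s) * g s))
        \<le> integral {0..t} (\<lambda>s. Ep s * (c s * \<bar>x s\<bar>) + Ep s * (p s * \<bar>y1 s\<bar>) / 2)"
    proof (rule integral_norm_bound_integral)
      have hc': "continuous_on {0..} (\<lambda>s. h (\<omega> * s))"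
        by (rule continuous_on_compose2[OF hc]) (auto intro!: continuous_intros)
      show "(\<lambda>s. Ep s * h (\<omega> * s) * g s) integrable_on {0..t}"
        by (rule cont_int_on) (auto intro!: continuous_intros Epc hc' gc)
      show "(\<lambda>s. Ep s * (c s * \<bar>x s\<bar>) + Ep s * (p s * \<bar>y1 s\<bar>) / 2) integrable_on {0..t}"
        by (rule cont_int_on) (auto intro!: continuous_intros Epc cc xc pc y1c)
      fix s assume s: "s \<in> {0..t}"
      have "norm (Ep s * h (\<omega> * s) * g s) = Ep s * (\<bar>h (\<omega> * s)\<bar> * \<bar>g s\<bar>)"
        using Ep0[of s] by (simp add: abs_mult)
      also have "\<dots> \<le> Ep s * (1 * (c s * \<bar>x s\<bar> + p s * \<bar>y1 s\<bar> / 2))"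
        using Ep0[of s] gb[of s] s hb[of "\<omega> * s"]
        by (intro mult_left_mono mult_mono) auto
      finally show "norm (Ep s * h (\<omega> * s) * g s) \<le> Ep s * (c s * \<bar>x s\<bar>) + Ep s * (p s * \<bar>y1 s\<bar>) / 2"
        by (simp add: algebra_simps)
    qed
    also have "\<dots> = Ic t + Ip t / 2"
      unfolding Ic_def Ip_def
      by (subst integral_add) (auto intro!: cont_int_on continuous_intros Epc cc xc pc y1c)
    finally show ?thesis by simp
  qed
  have xJ: "\<bar>x t - J t\<bar> \<le> 2 / \<omega> * (Ic t / Ep t) + 1 / \<omega> * (Ip t / Ep t)" if t: "t \<ge> 0" for t
  proof -
    have "\<omega> * (x t - J t) = (sin (\<omega> * t) * Cg t - cos (\<omega> * t) * Sg t) / Ep t"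
      using repr'[OF t] Jeq[OF t] by simp
    then have "\<omega> * \<bar>x t - J t\<bar> = \<bar>sin (\<omega> * t) * Cg t - cos (\<omega> * t) * Sg t\<bar> / Ep t"
      using omega_pos Ep0[of t] by (metis abs_divide abs_mult abs_of_pos)
    also have "\<dots> \<le> (\<bar>Cg t\<bar> + \<bar>Sg t\<bar>) / Ep t"
    proof (rule divide_right_mono)
      have "\<bar>sin (\<omega> * t) * Cg t - cos (\<omega> * t) * Sg t\<bar> \<le> \<bar>sin (\<omega> * t)\<bar> * \<bar>Cg t\<bar> + \<bar>cos (\<omega> * t)\<bar> * \<bar>Sg t\<bar>"
        by (metis abs_mult abs_triangle_ineq4)
      also have "\<dots> \<le> 1 * \<bar>Cg t\<bar> + 1 * \<bar>Sg t\<bar>"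
        by (intro add_mono mult_right_mono) auto
      finally show "\<bar>sin (\<omega> * t) * Cg t - cos (\<omega> * t) * Sg t\<bar> \<le> \<bar>Cg t\<bar> + \<bar>Sg t\<bar>" by simp
    qed (use Ep0 less_imp_le in auto)
    also have "\<dots> \<le> (2 * (Ic t + Ip t / 2)) / Ep t"
    proof (rule divide_right_mono)
      have "\<bar>Cg t\<bar> \<le> Ic t + Ip t / 2" unfolding Cg_def by (rule Qb[OF t]) (auto intro: continuous_intros)
      moreover have "\<bar>Sg t\<bar> \<le> Ic t + Ip t / 2" unfolding Sg_def by (rule Qb[OF t]) (auto intro: continuous_intros)
      ultimately show "\<bar>Cg t\<bar> + \<bar>Sg t\<bar> \<le> 2 * (Ic t + Ip t / 2)" by simp
    qed (use Ep0 less_imp_le in auto)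
    finally have "\<omega> * \<bar>x t - J t\<bar> \<le> (2 * (Ic t + Ip t / 2)) / Ep t" .
    then show ?thesis using omega_pos Ep0[of t] by (simp add: field_simps)
  qed
  have EpFTC: "integral {T..t} (\<lambda>s. Ep s * p s) = 2 * Ep t - 2 * Ep T" if T: "0 \<le> T" "T \<le> t" for T t
  proof -
    have "((\<lambda>s. Ep s * p s) has_integral (2 * Ep t - 2 * Ep T)) {T..t}"
    proof (rule fundamental_theorem_of_calculus[OF T(2)])
      fix s assume s: "s \<in> {T..t}"
      then have s0: "s \<ge> 0" using T by auto
      have "((\<lambda>s. 2 * Ep s) has_real_derivative 2 * (Ep s * (p s / 2))) (at s within {0..})"
        by (rule DERIV_cmult[OF Epd[OF s0]])
      then have "((\<lambda>s. 2 * Ep s) has_real_derivative 2 * (Ep s * (p s / 2))) (at s within {T..t})"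
        by (rule has_field_derivative_subset) (use T in auto)
      then have "((\<lambda>s. 2 * Ep s) has_real_derivative Ep s * p s) (at s within {T..t})"
        by simp
      then show "((\<lambda>s. 2 * Ep s) has_vector_derivative Ep s * p s) (at s within {T..t})"
        by (simp add: has_real_derivative_iff_has_vector_derivative)
    qed
    then show ?thesis by (rule integral_unique)
  qed
  have Ip_lim: "((\<lambda>t. Ip t / Ep t) \<longlongrightarrow> 0) at_top"
    unfolding Ip_def
  proof (rule Gamma_lim[OF Epc Ep1 Eplim])
    show "continuous_on {0..} (\<lambda>s. p s * \<bar>y1 s\<bar>)" by (intro continuous_intros pc y1c)
    show "\<And>s. s \<ge> 0 \<Longrightarrow> p s * \<bar>y1 s\<bar> \<ge> 0" using p0 by simp
    fix e :: real assume e: "e > 0"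
    have "eventually (\<lambda>s. \<bar>y1 s\<bar> < e / 2) at_top"
      using tendstoD[OF y1_lim[folded y1_def], of "e/2"] e by (simp add: dist_real_def)
    then obtain T0 where T0: "\<And>s. s \<ge> T0 \<Longrightarrow> \<bar>y1 s\<bar> < e / 2" unfolding eventually_at_top_linorder by blast
    define T where "T = max 0 T0"
    have T: "T \<ge> 0" "\<And>s. s \<ge> T \<Longrightarrow> \<bar>y1 s\<bar> < e / 2" unfolding T_def using T0 by auto
    show "\<exists>T\<ge>0. \<forall>t\<ge>T. integral {T..t} (\<lambda>s. Ep s * (p s * \<bar>y1 s\<bar>)) \<le> e * Ep t"
    proof (intro exI[of _ T] conjI allI impI T(1))
      fix t assume t: "t \<ge> T"
      have "integral {T..t} (\<lambda>s. Ep s * (p s * \<bar>y1 s\<bar>)) \<le> integral {T..t} (\<lambda>s. e / 2 * (Ep s * p s))"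
      proof (rule integral_le)
        show "(\<lambda>s. Ep s * (p s * \<bar>y1 s\<bar>)) integrable_on {T..t}"
          by (rule cont_int_on[OF _ T(1)]) (intro continuous_intros Epc pc y1c)
        show "(\<lambda>s. e / 2 * (Ep s * p s)) integrable_on {T..t}"
          by (rule cont_int_on[OF _ T(1)]) (intro continuous_intros Epc pc)
        fix s assume s: "s \<in> {T..t}"
        then have s0: "s \<ge> 0" using T by auto
        have "Ep s * p s * \<bar>y1 s\<bar> \<le> Ep s * p s * (e / 2)"
          using T(2)[of s] s Ep0[of s] p0[OF s0] by (intro mult_left_mono) auto
        then show "Ep s * (p s * \<bar>y1 s\<bar>) \<le> e / 2 * (Ep s * p s)" by (simp add: algebra_simps)
      qed
      also have "\<dots> = e / 2 * (2 * Ep t - 2 * Ep T)" using EpFTC[OF T(1) t] by simp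
      also have "\<dots> \<le> e * Ep t" using e Ep0[of T] by (simp add: algebra_simps)
      finally show "integral {T..t} (\<lambda>s. Ep s * (p s * \<bar>y1 s\<bar>)) \<le> e * Ep t" .
    qed
  qed
  have p'FTC: "integral {T..t} p' = p t - p T" if T: "0 \<le> T" "T \<le> t" for T t
  proof -
    have "(p' has_integral (p t - p T)) {T..t}"
    proof (rule fundamental_theorem_of_calculus[OF T(2)])
      fix s assume s: "s \<in> {T..t}"
      then have s0: "s \<ge> 0" using T by auto
      have "(p has_real_derivative p' s) (at s within {T..t})"
        by (rule has_field_derivative_subset[OF p_deriv[OF s0]]) (use T in auto)
      then show "(p has_vector_derivative p' s) (at s within {T..t})"
        by (simp add: has_real_derivative_iff_has_vector_derivative)
    qed
    then show ?thesis by (rule integral_unique)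
  qed
  have pdec: "p t \<le> p T" if T: "0 \<le> T" "T \<le> t" for T t
  proof -
    have "integral {T..t} p' \<le> integral {T..t} (\<lambda>s. 0)"
    proof (rule integral_le)
      show "p' integrable_on {T..t}" by (rule cont_int_on[OF p'_cont T(1)])
      fix s assume "s \<in> {T..t}"
      then show "p' s \<le> 0" using p'_neg[of s] T by auto
    qed auto
    then show ?thesis using p'FTC[OF T] by simp
  qed
  define F where "F t = integral {0..t} (\<lambda>s. p s ^ 2)" for t
  define Lp where "Lp = (LINT s:{0..}|lborel. p s ^ 2)"
  have p2c: "continuous_on {0..} (\<lambda>s. p s ^ 2)" by (intro continuous_intros pc)
  have Flim: "(F \<longlongrightarrow> Lp) at_top"
  proof -
    have "((\<lambda>b. LINT s:{0..b}|lborel. p s ^ 2) \<longlongrightarrow> Lp) at_top"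
      unfolding Lp_def by (rule tendsto_set_lebesgue_integral_at_top[OF _ p_sq_int]) auto
    moreover have "eventually (\<lambda>b. (LINT s:{0..b}|lborel. p s ^ 2) = F b) at_top"
      using eventually_ge_at_top[of 0]
      by eventually_elim (auto simp: F_def intro!: lint_eq_int continuous_on_subset[OF p2c])
    ultimately show ?thesis by (rule Lim_transform_eventually)
  qed
  have Fsplit: "F t = F T + integral {T..t} (\<lambda>s. p s ^ 2)" if "0 \<le> T" "T \<le> t" for T t
    unfolding F_def by (rule int_split0[OF p2c that])
  have Fm: "F T \<le> F t" if "0 \<le> T" "T \<le> t" for T t
  proof -
    have "integral {T..t} (\<lambda>s. p s ^ 2) \<ge> 0" by (rule int_nonneg0[OF p2c that(1)]) simp
    then show ?thesis using Fsplit[OF that] by simp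
  qed
  have FLp: "F t \<le> Lp" if t: "t \<ge> 0" for t
  proof (rule tendsto_lowerbound[OF Flim])
    show "eventually (\<lambda>u. F t \<le> F u) at_top"
      using eventually_ge_at_top[of t] by eventually_elim (use Fm t in auto)
  qed simp
  have plim: "(p \<longlongrightarrow> 0) at_top"
  proof -
    have psq: "p T ^ 2 \<le> Lp / T" if T: "T > 0" for T
    proof -
      have "integral {0..T} (\<lambda>s. p T ^ 2) \<le> F T"
        unfolding F_def
      proof (rule integral_le)
        show "(\<lambda>s. p s ^ 2) integrable_on {0..T}" by (rule cont_int_on[OF p2c]) simp
        fix s assume s: "s \<in> {0..T}"
        then show "p T ^ 2 \<le> p s ^ 2" using pdec[of s T] p0[of T] T by (intro power_mono) auto
      qed (rule integrable_const_ivl)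
      then have "T * p T ^ 2 \<le> Lp" using FLp[of T] T by simp
      then show ?thesis using T by (simp add: field_simps)
    qed
    have l1: "((\<lambda>T. Lp / T) \<longlongrightarrow> 0) at_top"
      by (rule tendsto_divide_0[OF tendsto_const filterlim_at_top_imp_at_infinity[OF filterlim_ident]])
    have e0: "eventually (\<lambda>T. (0::real) \<le> p T ^ 2) at_top" by simp
    have e1: "eventually (\<lambda>T. p T ^ 2 \<le> Lp / T) at_top"
      using eventually_gt_at_top[of 0] by eventually_elim (rule psq)
    have "((\<lambda>T. p T ^ 2) \<longlongrightarrow> 0) at_top"
      by (rule tendsto_sandwich[OF e0 e1 tendsto_const l1])
    then have l2: "((\<lambda>T. sqrt (p T ^ 2)) \<longlongrightarrow> sqrt 0) at_top" by (rule tendsto_real_sqrt)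
    have e2: "eventually (\<lambda>T. sqrt (p T ^ 2) = p T) at_top"
      using eventually_ge_at_top[of 0] by eventually_elim (use p0 in auto)
    show ?thesis using Lim_transform_eventually[OF l2 e2] by simp
  qed
  define \<theta> where "\<theta> T = (Lp - F T) / 4 + p T / 2" for T
  have \<theta>lim: "(\<theta> \<longlongrightarrow> 0) at_top"
  proof -
    have "(\<theta> \<longlongrightarrow> (Lp - Lp) / 4 + 0 / 2) at_top"
      unfolding \<theta>_def[abs_def] by (intro tendsto_intros Flim plim) auto
    then show ?thesis by simp
  qed
  have tail: "integral {T..t} c \<le> \<theta> T" if T: "0 \<le> T" "T \<le> t" for T t
  proof -
    have "integral {T..t} c \<le> integral {T..t} (\<lambda>s. p s ^ 2 / 4 - p' s / 2)"
    proof (rule integral_le)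
      show "c integrable_on {T..t}" by (rule cont_int_on[OF cc T(1)])
      show "(\<lambda>s. p s ^ 2 / 4 - p' s / 2) integrable_on {T..t}"
        by (rule cont_int_on[OF _ T(1)]) (auto intro!: continuous_intros pc p'_cont)
      fix s assume s: "s \<in> {T..t}"
      then have "p' s < 0" using p'_neg T by auto
      then show "c s \<le> p s ^ 2 / 4 - p' s / 2" unfolding c_def by (simp add: abs_le_iff)
    qed
    also have "\<dots> = integral {T..t} (\<lambda>s. p s ^ 2) / 4 - integral {T..t} p' / 2"
      by (subst integral_diff) (auto intro!: cont_int_on[OF _ T(1)] continuous_intros pc p'_cont)
    also have "\<dots> = (F t - F T) / 4 - (p t - p T) / 2" using Fsplit[OF T] p'FTC[OF T] by simp
    also have "\<dots> \<le> \<theta> T" unfolding \<theta>_def using FLp[of t] T p0[of t] by (auto simp: field_simps)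
    finally show ?thesis .
  qed
  have Jfun: "(\<lambda>t. LINT s:{0..t}|lborel. Efun p t s * L1fun \<omega> t s * y1fun \<omega> f s) = J"
    unfolding J_def ..
  show ?thesis unfolding Jfun
  proof
    assume xlim: "(x \<longlongrightarrow> 0) at_top"
    have Ic_lim: "((\<lambda>t. Ic t / Ep t) \<longlongrightarrow> 0) at_top"
      unfolding Ic_def
    proof (rule Gamma_lim[OF Epc Ep1 Eplim])
      show "continuous_on {0..} (\<lambda>s. c s * \<bar>x s\<bar>)" by (intro continuous_intros cc xc)
      show "\<And>s. s \<ge> 0 \<Longrightarrow> c s * \<bar>x s\<bar> \<ge> 0" using c0 by simp
      fix e :: real assume e: "e > 0"
      have "eventually (\<lambda>s. \<bar>x s\<bar> < e) at_top"
        using tendstoD[OF xlim, of e] e by (simp add: dist_real_def)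
      then obtain T0 where T0: "\<And>s. s \<ge> T0 \<Longrightarrow> \<bar>x s\<bar> < e" unfolding eventually_at_top_linorder by blast
      have "eventually (\<lambda>T. \<theta> T < 1) at_top" using \<theta>lim by (intro order_tendstoD) auto
      then obtain T1 where T1: "\<And>T. T \<ge> T1 \<Longrightarrow> \<theta> T < 1" unfolding eventually_at_top_linorder by blast
      define T where "T = max 0 (max T0 T1)"
      have T: "T \<ge> 0" "\<And>s. s \<ge> T \<Longrightarrow> \<bar>x s\<bar> < e" "\<theta> T < 1" unfolding T_def using T0 T1 by auto
      show "\<exists>T\<ge>0. \<forall>t\<ge>T. integral {T..t} (\<lambda>s. Ep s * (c s * \<bar>x s\<bar>)) \<le> e * Ep t"
      proof (intro exI[of _ T] conjI allI impI T(1))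
        fix t assume t: "t \<ge> T"
        have "integral {T..t} (\<lambda>s. Ep s * (c s * \<bar>x s\<bar>)) \<le> Ep t * e * \<theta> T"
        proof (rule H1[OF Epc Epm _ cc _ xc tail T(1) t])
          show "\<And>t. t \<ge> 0 \<Longrightarrow> Ep t \<ge> 0" using Ep0 less_imp_le by blast
          show "\<And>s. s \<ge> 0 \<Longrightarrow> c s \<ge> 0" using c0 by blast
          show "\<And>r. T \<le> r \<Longrightarrow> r \<le> t \<Longrightarrow> \<bar>x r\<bar> \<le> e" using T(2) less_imp_le by blast
        qed
        also have "\<dots> \<le> Ep t * e * 1"
          using T(3) Ep0[of t] e by (intro mult_left_mono) auto
        finally show "integral {T..t} (\<lambda>s. Ep s * (c s * \<bar>x s\<bar>)) \<le> e * Ep t" by (simp add: mult.commute)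
      qed
    qed
    show "(J \<longlongrightarrow> 0) at_top"
    proof (rule Lim_null_comparison)
      show "eventually (\<lambda>t. norm (J t) \<le> \<bar>x t\<bar> + (2 / \<omega> * (Ic t / Ep t) + 1 / \<omega> * (Ip t / Ep t))) at_top"
        using eventually_ge_at_top[of 0]
      proof eventually_elim
        case (elim t)
        have "\<bar>J t\<bar> \<le> \<bar>x t\<bar> + \<bar>x t - J t\<bar>" by linarith
        then show ?case using xJ[OF elim] by simp
      qed
      have "((\<lambda>t. \<bar>x t\<bar> + (2 / \<omega> * (Ic t / Ep t) + 1 / \<omega> * (Ip t / Ep t))) \<longlongrightarrow> 0 + (2 / \<omega> * 0 + 1 / \<omega> * 0)) at_top"
        by (intro tendsto_intros Ic_lim Ip_lim tendsto_rabs_zero xlim)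
      then show "((\<lambda>t. \<bar>x t\<bar> + (2 / \<omega> * (Ic t / Ep t) + 1 / \<omega> * (Ip t / Ep t))) \<longlongrightarrow> 0) at_top" by simp
    qed
  next
    assume Jlim: "(J \<longlongrightarrow> 0) at_top"
    show "(x \<longlongrightarrow> 0) at_top"
    proof (rule x_lim[OF Epc Epm Ep1 Eplim cc _ xc tail \<theta>lim, where \<delta>="\<lambda>t. \<bar>J t\<bar> + 1 / \<omega> * (Ip t / Ep t)" and \<kappa>="2 / \<omega>"])
      show "\<And>s. s \<ge> 0 \<Longrightarrow> c s \<ge> 0" using c0 by simp
      have "((\<lambda>t. \<bar>J t\<bar> + 1 / \<omega> * (Ip t / Ep t)) \<longlongrightarrow> 0 + 1 / \<omega> * 0) at_top"
        by (intro tendsto_intros Ip_lim tendsto_rabs_zero Jlim)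
      then show "((\<lambda>t. \<bar>J t\<bar> + 1 / \<omega> * (Ip t / Ep t)) \<longlongrightarrow> 0) at_top" by simp
      show "2 / \<omega> \<ge> 0" using omega_pos by simp
      fix t :: real assume t: "t \<ge> 0"
      have "\<bar>x t\<bar> \<le> \<bar>J t\<bar> + \<bar>x t - J t\<bar>" by linarith
      then show "\<bar>x t\<bar> \<le> \<bar>J t\<bar> + 1 / \<omega> * (Ip t / Ep t) + 2 / \<omega> * (integral {0..t} (\<lambda>s. Ep s * (c s * \<bar>x s\<bar>)) / Ep t)"
        using xJ[OF t] unfolding Ic_def by simp
    qed
  qed
qed

end
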